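(* If $(r,s,0,0)\in\mu^{-1}(0)^{rss}$, i.e. $r\in\mathfrak{b}$ has pairwise distinct diagonal entries and $[r,s]\in\mathfrak{n}^+$, then $s$ is diagonal (its lower triangular representative in $\mathfrak{gl}_n/\mathfrak{n}^+$ has all strictly lower entries zero).
   Context: $\mathfrak{b}$: upper triangular complex $n\times n$ matrices; $\mathfrak{n}^+$: strictly upper triangular matrices; $\mathfrak{b}^*=\mathfrak{gl}_n/\mathfrak{n}^+$, identified with lower triangular matrices. $\mu(r,s,i,j)=[r,s]+ij\bmod\mathfrak{n}^+$ on $\mathfrak{b}\times\mathfrak{b}^*\times\mathbb{C}^n\times(\mathbb{C}^n)^*$, and $\mu^{-1}(0)^{rss}$ is the set of zeros of $\mu$ with $r$ having pairwise distinct diagonal entries. *)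

theory Defs
  imports Complex_Main
begin

(* n x n complex matrices represented as functions nat => nat => complex,
   only entries with indices < n are relevant *)
type_synonym cmat = "nat \<Rightarrow> nat \<Rightarrow> complex"

definition mat_mult :: "nat \<Rightarrow> cmat \<Rightarrow> cmat \<Rightarrow> cmat" where
  "mat_mult n A B = (\<lambda>i j. \<Sum>k<n. A i k * B k j)"

definition commutator :: "nat \<Rightarrow> cmat \<Rightarrow> cmat \<Rightarrow> cmat" where
  "commutator n A B = (\<lambda>i j. mat_mult n A B i j - mat_mult n B A i j)"

definition upper_tri :: "nat \<Rightarrow> cmat \<Rightarrow> bool" where
  "upper_tri n A \<longleftrightarrow> (\<forall>i<n. \<forall>j<n. j < i \<longrightarrow> A i j = 0)"

definition strictly_upper_tri :: "nat \<Rightarrow> cmat \<Rightarrow> bool" where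
  "strictly_upper_tri n A \<longleftrightarrow> (\<forall>i<n. \<forall>j<n. j \<le> i \<longrightarrow> A i j = 0)"

(* representatives of b^* = gl_n / n^+ : lower triangular *)
definition lower_tri :: "nat \<Rightarrow> cmat \<Rightarrow> bool" where
  "lower_tri n A \<longleftrightarrow> (\<forall>i<n. \<forall>j<n. i < j \<longrightarrow> A i j = 0)"

definition diagonal_mat :: "nat \<Rightarrow> cmat \<Rightarrow> bool" where
  "diagonal_mat n A \<longleftrightarrow> (\<forall>i<n. \<forall>j<n. i \<noteq> j \<longrightarrow> A i j = 0)"

definition distinct_diag :: "nat \<Rightarrow> cmat \<Rightarrow> bool" where
  "distinct_diag n A \<longleftrightarrow> (\<forall>i<n. \<forall>j<n. i \<noteq> j \<longrightarrow> A i i \<noteq> A j j)"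

end

theory Submission
  imports Defs
begin

lemma sum_single_nz:
  fixes f :: "nat \<Rightarrow> complex"
  assumes "finite A" "i \<in> A" "\<And>k. k \<in> A \<Longrightarrow> k \<noteq> i \<Longrightarrow> f k = 0"
  shows "sum f A = f i"
proof -
  have "sum f A = f i + sum f (A - {i})" using assms(1,2) by (rule sum.remove)
  also have "sum f (A - {i}) = 0" using assms(3) by (intro sum.neutral) auto
  finally show ?thesis by simp
qed

theorem mainTheorem15:
  fixes n :: nat and r s :: cmat
  assumes "upper_tri n r"
    and "lower_tri n s"
    and "distinct_diag n r"
    and "strictly_upper_tri n (commutator n r s)"
  shows "diagonal_mat n s"
proof -
  have main: "\<forall>i j. i < n \<longrightarrow> j < i \<longrightarrow> n - (i - j) = d \<longrightarrow> s i j = 0" for d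
  proof (induction d rule: less_induct)
    case (less d)
    show ?case
    proof (intro allI impI)
      fix i j assume ij: "i < n" "j < i" "n - (i - j) = d"
      have IH: "s a b = 0" if "a < n" "b < a" "a - b > i - j" for a b
        using less.IH[of "n - (a - b)"] that ij by auto
      have c0: "commutator n r s i j = 0"
        using assms(4) ij unfolding strictly_upper_tri_def by auto
      have s1: "(\<Sum>k<n. r i k * s k j) = r i i * s i j"
      proof (rule sum_single_nz)
        fix k assume k: "k \<in> {..<n}" "k \<noteq> i"
        show "r i k * s k j = 0"
        proof (cases "k < i")
          case True then show ?thesis using assms(1) ij k unfolding upper_tri_def by auto
        next
          case False then have "s k j = 0" using IH[of k j] ij k by auto
          then show ?thesis by simp
        qed
      qed (use ij in auto)
      have s2: "(\<Sum>k<n. s i k * r k j) = s i j * r j j"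
      proof (rule sum_single_nz)
        fix k assume k: "k \<in> {..<n}" "k \<noteq> j"
        show "s i k * r k j = 0"
        proof (cases "j < k")
          case True then show ?thesis using assms(1) ij k unfolding upper_tri_def by auto
        next
          case False then have "s i k = 0" using IH[of i k] ij k by auto
          then show ?thesis by simp
        qed
      qed (use ij in auto)
      have "r i i * s i j - s i j * r j j = 0"
        using c0 s1 s2 unfolding commutator_def mat_mult_def by simp
      then have "(r i i - r j j) * s i j = 0" by (simp add: algebra_simps)
      moreover have "r i i \<noteq> r j j" using assms(3) ij unfolding distinct_diag_def by auto
      ultimately show "s i j = 0" by simp
    qed
  qed
  show ?thesis unfolding diagonal_mat_def
  proof (intro allI impI)
    fix i j assume "i < n" "j < n" "i \<noteq> j"
    then consider "i < j" | "j < i" by linarith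
    then show "s i j = 0"
    proof cases
      case 1 then show ?thesis using assms(2) \<open>j < n\<close> \<open>i < n\<close> unfolding lower_tri_def by auto
    next
      case 2 then show ?thesis using main \<open>i < n\<close> by blast
    qed
  qed
qed

end
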